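(* Let $a,r$ be positive integers and let $a_n=a+(n-1)r$ for $n\ge 1$. Then the sequence $(\Gamma(a_n,a_{n+1}))_{n\ge 1}$ is either $1,2,1,2,\ldots$ or $2,1,2,1,\ldots$.
   Context: For relatively prime positive integers $p,q$, exactly one of the equations $px+qy=\frac{(p-1)(q-1)}{2}$ (Equation 1) and $px+qy+1=\frac{(p-1)(q-1)}{2}$ (Equation 2) has a solution in nonnegative integers $(x,y)$. For positive integers $a,b$ with $d=\gcd(a,b)$, $\Gamma(a,b)=1$ if Equation 1 with $(p,q)=(a/d,b/d)$ has a nonnegative integer solution, and $\Gamma(a,b)=2$ otherwise. *)

theory Defs
  imports Main
begin

text \<open>Equation 1 for coprime p, q: p x + q y = (p-1)(q-1)/2 has a solution in
  nonnegative integers. For coprime p, q the number (p-1)(q-1) is even, so the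
  natural-number division is exact.\<close>
definition eq1_solvable :: "nat \<Rightarrow> nat \<Rightarrow> bool" where
  "eq1_solvable p q \<longleftrightarrow> (\<exists>x y :: nat. p * x + q * y = ((p - 1) * (q - 1)) div 2)"

definition Gamma :: "nat \<Rightarrow> nat \<Rightarrow> nat" where
  "Gamma a b = (let d = gcd a b in if eq1_solvable (a div d) (b div d) then 1 else 2)"

end

theory Submission
  imports Defs
begin

definition PP :: "nat \<Rightarrow> nat \<Rightarrow> bool" where
  "PP p q \<longleftrightarrow> (\<exists>X Y. odd X \<and> odd Y \<and> p*X + q*Y = p*q+1)"

lemma eq1_PP:
  fixes p q :: nat
  assumes "coprime p q" "p > 0" "q > 0"
  shows "eq1_solvable p q \<longleftrightarrow> PP p q"
proof -
  obtain p' q' where pq: "p = Suc p'" "q = Suc q'" using assms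
    by (metis gr0_implies_Suc)
  have ev: "even (p' * q')"
  proof (rule ccontr)
    assume "odd (p'*q')"
    then have "even p" "even q" using pq by auto
    then have "2 dvd gcd p q" by auto
    then show False using assms(1) by simp
  qed
  then obtain m where m: "p'*q' = 2*m" by blast
  have N: "((p - 1) * (q - 1)) div 2 = m" using pq m by simp
  show ?thesis
  proof
    assume "eq1_solvable p q"
    then obtain x y where xy: "p*x + q*y = m" unfolding eq1_solvable_def N by blast
    have "p*(2*x+1) + q*(2*y+1) = p*q+1"
      using xy m pq by (simp add: algebra_simps)
    then show "PP p q" unfolding PP_def by (metis odd_two_times_div_two_succ even_plus_one_iff even_mult_iff dvd_triv_left odd_one)
  next
    assume "PP p q"
    then obtain X Y where XY: "odd X" "odd Y" "p*X + q*Y = p*q+1" unfolding PP_def by blast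
    obtain x where x: "X = 2*x+1" using XY(1) oddE by blast
    obtain y where y: "Y = 2*y+1" using XY(2) oddE by blast
    have "2*(p*x+q*y) = 2*m" using XY(3) x y m pq by (simp add: algebra_simps)
    then have "p*x+q*y = m" by simp
    then show "eq1_solvable p q" unfolding eq1_solvable_def N by blast
  qed
qed

lemma sol_le:
  fixes p q X Y :: nat
  assumes "p*X + q*Y = p*q+1" "Y > 0" "p > 0" "q > 0"
  shows "X \<le> q"
proof (rule ccontr)
  assume "\<not> X \<le> q"
  then have "X \<ge> q+1" by linarith
  then have "p*X \<ge> p*q + p" using assms(3) by (metis add.commute mult.commute mult_le_mono1 distrib_left mult.right_neutral)
  moreover have "q*Y \<ge> q" using assms(2) by simp
  ultimately show False using assms(1) assms(3,4) by linarith
qed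

lemma sol_uniq_aux:
  fixes p q X Y X' Y' :: nat
  assumes "coprime p q" "p > 0" "q > 0"
    "p*X + q*Y = p*q+1" "p*X' + q*Y' = p*q+1" "X > 0" "Y > 0" "Y' > 0" "X \<le> X'"
  shows "X = X'"
proof -
  have "X' \<le> q" using sol_le assms by blast
  obtain t where t: "X' = X + t" using assms(9) le_Suc_ex by blast
  have "p*X + (p*t + q*Y') = p*X + q*Y" using assms(4,5) t by (simp add: algebra_simps)
  then have "p*(X'-X) + q*Y' = q*Y" using t by simp
  then have "q dvd p*(X'-X)" by (metis dvdI dvd_add_times_triv_right_iff mult.commute)
  then have "q dvd (X'-X)" using assms(1) coprime_commute coprime_dvd_mult_right_iff by blast
  moreover have "X' - X < q" using \<open>X' \<le> q\<close> assms(3,6) by arith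
  ultimately have "X' - X = 0" by auto
  then show ?thesis using assms(9) by simp
qed


lemma sol_uniq:
  fixes p q X Y X' Y' :: nat
  assumes "coprime p q" "p > 0" "q > 0"
    "p*X + q*Y = p*q+1" "p*X' + q*Y' = p*q+1" "X > 0" "Y > 0" "X' > 0" "Y' > 0"
  shows "X = X' \<and> Y = Y'"
proof -
  have "X = X'"
  proof (cases "X \<le> X'")
    case True then show ?thesis using sol_uniq_aux assms by blast
  next
    case False then show ?thesis using sol_uniq_aux[of p q X' Y' X Y] assms by (metis nat_le_linear)
  qed
  then have "q*Y = q*Y'" using assms(4,5) by (metis add_left_cancel)
  then show ?thesis using assms(3) \<open>X = X'\<close> by simp
qed

lemma sol_exists:
  fixes p q :: nat
  assumes "coprime p q" "p > 0" "q > 0"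
  shows "\<exists>X Y. X > 0 \<and> Y > 0 \<and> p*X + q*Y = p*q+1"
proof (cases "q = 1")
  case True then show ?thesis by (intro exI[of _ 1]) auto
next
  case False
  then have q2: "q \<ge> 2" using assms by simp
  obtain x y where xy: "p*x = q*y + gcd p q" using bezout_nat assms(2) by (metis neq0_conv)
  then have xy: "p*x = q*y + 1" using assms(1) by simp
  define X where "X = x mod q"
  have "(p*X) mod q = 1 mod q" unfolding X_def using xy by (metis mod_mult_right_eq mod_mult_self4)
  then have "(p*X) mod q = 1" using q2 by simp
  then obtain k where k: "p*X = q*k + 1" by (metis div_mod_decomp mult.commute)
  have "X < q" unfolding X_def using assms by simp
  then have "p*X < p*q" using assms by simp
  then have "k < p" using k by (metis mult.commute add_lessD1 nat_mult_less_cancel_disj)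
  have "X > 0" using \<open>(p*X) mod q = 1\<close> q2 by (cases "X = 0") auto
  show ?thesis
    apply (rule exI[of _ X], rule exI[of _ "p-k"])
    using \<open>X>0\<close> \<open>k<p\<close> k by (simp add: diff_mult_distrib2 mult.commute)
qed

lemma PP_char:
  fixes p q X Y :: nat
  assumes "coprime p q" "p > 0" "q > 0" "X > 0" "Y > 0" "p*X + q*Y = p*q+1"
  shows "PP p q \<longleftrightarrow> odd X \<and> odd Y"
proof
  assume "PP p q"
  then obtain X' Y' where h: "odd X'" "odd Y'" "p*X' + q*Y' = p*q+1" unfolding PP_def by blast
  then have "X' > 0" "Y' > 0" by (auto intro: odd_pos)
  then have "X = X' \<and> Y = Y'" using sol_uniq[of p q X Y X' Y'] assms h by blast
  then show "odd X \<and> odd Y" using h by simp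
next
  assume "odd X \<and> odd Y"
  then show "PP p q" unfolding PP_def using assms(6) by blast
qed

lemma flip:
  fixes p q :: nat
  assumes "coprime p q" "0 < p" "p < q"
  shows "PP q (2*q-p) \<longleftrightarrow> \<not> PP p q"
proof -
  define s where "s = 2*q - p"
  have s0: "s > 0" using assms unfolding s_def by simp
  have cs: "coprime q s"
  proof (rule coprimeI)
    fix c assume c: "c dvd q" "c dvd s"
    have "p = 2*q - s" using assms unfolding s_def by simp
    then have "c dvd p" using c by (simp add: dvd_diff_nat)
    then show "is_unit c" using c(1) assms(1) by (meson coprime_common_divisor)
  qed
  obtain X Y where XY: "X > 0" "Y > 0" "p*X + q*Y = p*q+1" using sol_exists assms by (metis less_trans)
  have "X \<le> q" using sol_le XY assms by (meson less_trans)
  have "X \<noteq> q"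
  proof
    assume "X = q"
    then have "q*Y = 1" using XY(3) by simp
    then show False using assms by simp
  qed
  then have Xq: "X < q" using \<open>X \<le> q\<close> by simp
  have ieq: "int p * int X + int q * int Y = int p * int q + 1" using XY(3) by (metis of_nat_add of_nat_mult of_nat_1)
  have key: "int q * (2*int X + int Y - int p) = (2*int q - int p) * int X + 1" using ieq by (simp add: algebra_simps)
  have "(2*int q - int p) * int X + 1 > 0" using assms by simp
  then have "0 < int q * (2*int X + int Y - int p)" using key by linarith
  then have pos: "2*int X + int Y - int p > 0" by (simp add: zero_less_mult_iff)
  define X' where "X' = 2*X + Y - p"
  define Y' where "Y' = q - X"
  have X'i: "int X' = 2*int X + int Y - int p" unfolding X'_def using pos by linarith
  have Y'i: "int Y' = int q - int X" unfolding Y'_def using Xq by linarith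
  have si: "int s = 2*int q - int p" unfolding s_def using assms by linarith
  have "int q * int X' + int s * int Y' = int q * int s + 1"
    unfolding X'i Y'i si using ieq by (simp add: algebra_simps)
  then have eq': "q*X' + s*Y' = q*s+1" by (metis of_nat_add of_nat_mult of_nat_1 of_nat_eq_iff)
  have "X' > 0" "Y' > 0" using X'i pos Xq unfolding Y'_def by auto
  have c1: "PP p q \<longleftrightarrow> odd X \<and> odd Y" using PP_char assms XY by simp
  have c2: "PP q s \<longleftrightarrow> odd X' \<and> odd Y'" using PP_char cs assms s0 \<open>X' > 0\<close> \<open>Y' > 0\<close> eq' by simp
  have npq: "\<not> (even p \<and> even q)" using assms(1) by auto
  have par: "even (p*X + q*Y) \<longleftrightarrow> odd (p*q)" using XY(3) by simp
  have e1: "even X' \<longleftrightarrow> even (2*int X + int Y - int p)" unfolding X'i[symmetric] by simp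
  have e2: "even Y' \<longleftrightarrow> even (int q - int X)" unfolding Y'i[symmetric] by simp
  show ?thesis unfolding s_def[symmetric] c1 c2 e1 e2 using npq par by auto
qed


lemma Gamma_scale:
  fixes d x y :: nat
  assumes "d > 0" "x > 0" "y > 0" "coprime x y"
  shows "Gamma (d*x) (d*y) = (if PP x y then 1 else 2)"
proof -
  have "gcd (d*x) (d*y) = d" using assms by (simp add: gcd_mult_distrib_nat[symmetric])
  then show ?thesis unfolding Gamma_def Let_def using assms eq1_PP[of x y] by simp
qed

lemma cop_step:
  fixes a' r' m :: nat
  assumes "coprime a' r'"
  shows "coprime (a' + m*r') (a' + m*r' + r')"
proof (rule coprimeI)
  fix c assume c: "c dvd a' + m*r'" "c dvd a' + m*r' + r'"
  then have cr: "c dvd r'" by (simp add: dvd_add_right_iff)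
  then have "c dvd m*r'" by simp
  then have "c dvd a'" using c(1) by (simp add: dvd_add_left_iff)
  then show "is_unit c" using cr assms by (meson coprime_common_divisor)
qed

theorem theorem1p6:
  fixes a r :: nat
  assumes "0 < a" and "0 < r"
  shows "(\<forall>n\<ge>1. Gamma (a + (n - 1) * r) (a + n * r) = (if odd n then 1 else 2))
       \<or> (\<forall>n\<ge>1. Gamma (a + (n - 1) * r) (a + n * r) = (if odd n then 2 else 1))"
proof -
  define d where "d = gcd a r"
  have d0: "d > 0" using assms unfolding d_def by simp
  obtain a' where a': "a = d*a'" unfolding d_def by (metis gcd_dvd1 dvdE)
  obtain r' where r': "r = d*r'" unfolding d_def by (metis gcd_dvd2 dvdE)
  have "d * gcd a' r' = gcd (d*a') (d*r')" by (simp add: gcd_mult_distrib_nat)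
  also have "\<dots> = gcd a r" by (simp only: a'[symmetric] r'[symmetric])
  also have "\<dots> = d" by (simp only: d_def)
  finally have "d * gcd a' r' = d * 1" by simp
  then have cop: "coprime a' r'" using d0 by (simp add: coprime_iff_gcd_eq_1)
  have a0: "a' > 0" "r' > 0" using a' r' assms by auto
  define b where "b m = a' + m*r'" for m
  have bpos: "b m > 0" for m using a0 unfolding b_def by simp
  have bcop: "coprime (b m) (b (Suc m))" for m using cop_step[OF cop, of m] unfolding b_def by (simp add: algebra_simps)
  have flipb: "PP (b (Suc m)) (b (Suc (Suc m))) \<longleftrightarrow> \<not> PP (b m) (b (Suc m))" for m
  proof -
    have "2 * b (Suc m) - b m = b (Suc (Suc m))" unfolding b_def by simp
    moreover have "b m < b (Suc m)" unfolding b_def using a0 by simp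
    ultimately show ?thesis using flip[OF bcop[of m] bpos[of m]] by simp
  qed
  define c where "c = PP (b 0) (b 1)"
  have ind: "PP (b m) (b (Suc m)) \<longleftrightarrow> (c \<longleftrightarrow> even m)" for m
  proof (induction m)
    case 0 then show ?case unfolding c_def by simp
  next
    case (Suc m) then show ?case using flipb[of m] by simp
  qed
  have G: "Gamma (a + (n - 1) * r) (a + n * r) = (if PP (b (n-1)) (b (Suc (n-1))) then 1 else 2)" if "n \<ge> 1" for n
  proof -
    have "a + (n - 1) * r = d * b (n-1)" unfolding b_def a' r' by (simp add: algebra_simps)
    moreover have "a + n * r = d * b (Suc (n-1))" unfolding b_def a' r' using that by (simp add: algebra_simps)
    ultimately show ?thesis using Gamma_scale[OF d0 bpos bpos bcop] by simp
  qed
  have par: "even (n - 1) \<longleftrightarrow> odd n" if "n \<ge> 1" for n :: nat using that by (cases n) auto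
  show ?thesis
  proof (cases c)
    case True
    have "Gamma (a + (n - 1) * r) (a + n * r) = (if odd n then 1 else 2)" if "n \<ge> 1" for n
      using G[OF that] ind[of "n-1"] par[OF that] True that by auto
    then show ?thesis by blast
  next
    case False
    have "Gamma (a + (n - 1) * r) (a + n * r) = (if odd n then 2 else 1)" if "n \<ge> 1" for n
      using G[OF that] ind[of "n-1"] par[OF that] False that by auto
    then show ?thesis by blast
  qed
qed

end
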